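(* Let $q(x)\in\mathbb{Z}[x]$ be a monic polynomial of degree $g$ whose coefficient of $x^{g-1}$ is nonzero, and let $\mathrm{sym}(q)(x)=x^{g}\,q\!\left(x+\frac1x\right)$. Then $\mathrm{sym}(q)(x)$ is not a polynomial in $x^k$ for any integer $k>1$. *)

theory Defs
  imports "HOL-Computational_Algebra.Polynomial"
begin

text \<open>sym(q)(x) = x^g q(x + 1/x), with g = deg q, written as the integer polynomial
  sum_{i<=g} q_i (x^2+1)^i x^(g-i).\<close>
definition sym_poly :: "int poly \<Rightarrow> int poly" where
  "sym_poly q = (\<Sum>i\<le>degree q. smult (coeff q i) ([:1, 0, 1:] ^ i * monom 1 (degree q - i)))"

definition poly_in_power :: "int poly \<Rightarrow> nat \<Rightarrow> bool" where
  "poly_in_power p k \<longleftrightarrow> (\<exists>r. p = pcompose r (monom 1 k))"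

end

theory Submission
  imports Defs
begin

lemma coeff_pcomp_monom_ndvd:
  fixes r :: "'a::comm_semiring_1 poly"
  assumes "\<not> k dvd n"
  shows "coeff (pcompose r (monom 1 k)) n = 0"
  using assms
proof (induction r arbitrary: n rule: pCons_induct)
  case 0
  then show ?case by (cases "n = 0") auto
next
  case (pCons a p)
  have n0: "n \<noteq> 0" using pCons.prems by (metis dvd_0_right)
  have "coeff (pcompose (pCons a p) (monom 1 k)) n
        = coeff [:a:] n + coeff (monom 1 k * pcompose p (monom 1 k)) n"
    by (simp add: pcompose_pCons)
  also have "\<dots> = (if n < k then 0 else coeff (pcompose p (monom 1 k)) (n - k))"
    using n0 by (simp add: coeff_monom_mult coeff_pCons split: nat.splits)
  also have "\<dots> = 0"
  proof (cases "n < k")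
    case False
    then have "\<not> k dvd (n - k)" using pCons.prems
      by (metis dvd_add_left_iff dvd_refl le_add_diff_inverse not_less)
    then show ?thesis using False pCons.IH by simp
  qed simp
  finally show ?case .
qed

abbreviation PP :: "int poly" where "PP \<equiv> [:1, 0, 1:]"

lemma PP_split: "PP = 1 + monom 1 2"
  by (simp add: monom_altdef numeral_2_eq_2 one_pCons power2_eq_square)

lemma PP_odd: "odd n \<Longrightarrow> coeff (PP ^ i) n = 0"
proof (induction i arbitrary: n)
  case 0
  then show ?case using odd_pos by (auto simp: coeff_1)
next
  case (Suc i)
  have "PP ^ Suc i = PP ^ i + monom 1 2 * PP ^ i"
    by (subst power_Suc, subst PP_split) (simp add: algebra_simps)
  then have "coeff (PP ^ Suc i) n = coeff (PP ^ i) n + (if n < 2 then 0 else coeff (PP ^ i) (n - 2))"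
    by (simp add: coeff_monom_mult)
  moreover have "n \<ge> 2 \<Longrightarrow> odd (n - 2)" using Suc.prems by simp
  ultimately show ?case using Suc by auto
qed

lemma PP_deg: "degree (PP ^ i) = 2 * i"
  by (simp add: degree_power_eq)

lemma PP_lead: "coeff (PP ^ i) (2 * i) = 1"
proof -
  have "lead_coeff (PP ^ i) = 1" by (simp add: lead_coeff_power)
  then show ?thesis by (simp add: PP_deg)
qed

lemma term_coeff:
  "coeff (smult c (PP ^ i * monom 1 m)) n = (if n < m then 0 else c * coeff (PP ^ i) (n - m))"
  by (simp add: mult.commute[of _ "monom 1 m"] coeff_monom_mult)

lemma term_coeff2:
  "coeff (PP ^ i * monom 1 m) n = (if n < m then 0 else coeff (PP ^ i) (n - m))"
  by (simp add: mult.commute[of _ "monom 1 m"] coeff_monom_mult)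

theorem lemma3p3:
  fixes q :: "int poly" and g :: nat
  assumes "degree q = g" and "g \<ge> 1" and "lead_coeff q = 1"
    and "coeff q (g - 1) \<noteq> 0"
  shows "\<forall>k::nat. k > 1 \<longrightarrow> \<not> poly_in_power (sym_poly q) k"
proof (intro allI impI notI)
  fix k :: nat
  assume k: "k > 1" and pp: "poly_in_power (sym_poly q) k"
  then obtain r where r: "sym_poly q = pcompose r (monom 1 k)"
    unfolding poly_in_power_def by blast
  have sp: "coeff (sym_poly q) n = (\<Sum>i\<le>g. if n < g - i then 0 else coeff q i * coeff (PP ^ i) (n - (g - i)))" for n
    unfolding sym_poly_def assms(1) by (auto simp add: coeff_sum term_coeff2 intro!: sum.cong)
  have c1: "coeff (sym_poly q) (2*g) = 1"
  proof -
    have "coeff (sym_poly q) (2*g) = (\<Sum>i\<in>{g}. if 2*g < g - i then 0 else coeff q i * coeff (PP ^ i) (2*g - (g - i)))"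
      unfolding sp
    proof (rule sum.mono_neutral_right)
      show "\<forall>i\<in>{..g} - {g}. (if 2*g < g - i then 0 else coeff q i * coeff (PP ^ i) (2*g - (g - i))) = 0"
      proof
        fix i assume "i \<in> {..g} - {g}"
        then have "i < g" by auto
        then have "2*g - (g - i) > degree (PP ^ i)" by (simp add: PP_deg)
        then show "(if 2*g < g - i then 0 else coeff q i * coeff (PP ^ i) (2*g - (g - i))) = 0"
          by (simp add: coeff_eq_0)
      qed
    qed auto
    also have "\<dots> = 1" using assms(1,3) PP_lead[of g] by (simp add: mult_2)
    finally show ?thesis .
  qed
  have c2: "coeff (sym_poly q) (2*g - 1) = coeff q (g - 1)"
  proof -
    have "coeff (sym_poly q) (2*g - 1) = (\<Sum>i\<in>{g-1}. if 2*g - 1 < g - i then 0 else coeff q i * coeff (PP ^ i) (2*g - 1 - (g - i)))"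
      unfolding sp
    proof (rule sum.mono_neutral_right)
      show "\<forall>i\<in>{..g} - {g-1}. (if 2*g - 1 < g - i then 0 else coeff q i * coeff (PP ^ i) (2*g - 1 - (g - i))) = 0"
      proof
        fix i assume i: "i \<in> {..g} - {g-1}"
        show "(if 2*g - 1 < g - i then 0 else coeff q i * coeff (PP ^ i) (2*g - 1 - (g - i))) = 0"
        proof (cases "i = g")
          case True
          have "odd (2*g - 1 - (g - i))" using True assms(2) by simp
          then show ?thesis using PP_odd by simp
        next
          case False
          with i assms(2) have "i < g - 1" by auto
          then have "2*g - 1 - (g - i) > degree (PP ^ i)" by (simp add: PP_deg)
          then show ?thesis by (simp add: coeff_eq_0)
        qed
      qed
    qed auto
    also have "\<dots> = coeff q (g - 1)" using assms(2) PP_lead[of "g-1"]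
      by (simp add: algebra_simps right_diff_distrib')
    finally show ?thesis .
  qed
  have d1: "k dvd 2*g"
    using c1 coeff_pcomp_monom_ndvd[of k "2*g" r] r by fastforce
  have d2: "k dvd 2*g - 1"
    using c2 assms(4) coeff_pcomp_monom_ndvd[of k "2*g - 1" r] r by fastforce
  have "k dvd 1"
    using dvd_diff_nat[OF d1 d2] assms(2) by simp
  then show False using k by simp
qed

end
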